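(* Let $\mathcal{M}$ be a countable Scott set coded by $M = \bigoplus_i X_i$ and let $C \subseteq \omega^2$ be such that $\mathcal{U}^{\mathcal{M}}_C$ is an $\mathcal{M}$-cohesive largeness class. Then the class $$\langle \mathcal{U}^{\mathcal{M}}_C \rangle = \bigcap\{\mathcal{U}^X_e : e\in\omega,\ X\in\mathcal{M},\ \mathcal{U}^{\mathcal{M}}_C\cap\mathcal{U}^X_e \text{ is a largeness class}\}$$ is an $\mathcal{M}$-minimal largeness class contained in $\mathcal{U}^{\mathcal{M}}_C$.
   Context: A largeness class is a non-empty $\mathcal{A} \subseteq 2^\omega$ closed upward under $\subseteq$ such that for every finite cover $Y_0\cup\dots\cup Y_{k-1}=\omega$ some $Y_j \in \mathcal{A}$. A Scott set is a collection of sets closed under Turing reducibility and join such that every infinite binary tree in it has a path in it; it is countable coded by $M$ if it equals $\{X_i : i\in\omega\}$ with $M = \bigoplus_i X_i$. Fix an effective enumeration $\mathcal{U}^Z_0,\mathcal{U}^Z_1,\dots$ (uniform in the oracle $Z$) of all $\Sigma^0_1(Z)$ classes which are upward-closed under $\subseteq$. For $C\subseteq\omega^2$, $\mathcal{U}^{\mathcal{M}}_C = \bigcap_{\langle e,i\rangle\in C}\mathcal{U}^{X_i}_e$. For an infinite set $X$, $\mathcal{L}_X$ is the class of all sets having infinite intersection with $X$. A class $\mathcal{A}$ is $\mathcal{M}$-cohesive if for every $X \in \mathcal{M}$, either $\mathcal{A}\subseteq \mathcal{L}_X$ or $\mathcal{A}\subseteq\mathcal{L}_{\omega\setminus X}$.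 A class $\mathcal{A}$ is $\mathcal{M}$-minimal if for every $X\in\mathcal{M}$ and $e\in\omega$, either $\mathcal{A}\subseteq\mathcal{U}^X_e$ or $\mathcal{A}\cap\mathcal{U}^X_e$ is not a largeness class. *)

theory Defs
  imports Main "HOL-Library.Nat_Bijection"
begin

inductive PR :: "nat \<Rightarrow> (nat list \<Rightarrow> nat) \<Rightarrow> bool" where
  PR_zero: "PR n (\<lambda>_. 0)"
| PR_succ: "PR 1 (\<lambda>xs. Suc (xs ! 0))"
| PR_proj: "i < n \<Longrightarrow> PR n (\<lambda>xs. xs ! i)"
| PR_comp: "PR m f \<Longrightarrow> length gs = m \<Longrightarrow> (\<forall>g\<in>set gs. PR n g)
            \<Longrightarrow> PR n (\<lambda>xs. f (map (\<lambda>g. g xs) gs))"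
| PR_rec: "PR n f \<Longrightarrow> PR (Suc (Suc n)) g
           \<Longrightarrow> PR (Suc n) (\<lambda>xs. rec_nat (f (tl xs)) (\<lambda>k r. g (r # k # tl xs)) (hd xs))"

text \<open>The length-l initial segment of Z, coded by the canonical index of the finite set
  Z \<inter> {..<l}; together with l this determines the binary string Z restricted to l.\<close>
definition seg :: "nat set \<Rightarrow> nat \<Rightarrow> nat" where
  "seg Z l = set_encode (Z \<inter> {..<l})"

text \<open>W is Sigma01(Z), i.e. Z-c.e. (Kleene normal form with oracle prefixes).\<close>
definition sigma01_set :: "nat set \<Rightarrow> nat set \<Rightarrow> bool" where
  "sigma01_set Z W \<longleftrightarrow> (\<exists>p. PR 4 p \<and> W = {n. \<exists>l m. p [l, seg Z l, n, m] = 0})"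

definition turing_red :: "nat set \<Rightarrow> nat set \<Rightarrow> bool" where
  "turing_red B A \<longleftrightarrow> sigma01_set A B \<and> sigma01_set A (- B)"

definition join :: "nat set \<Rightarrow> nat set \<Rightarrow> nat set" where
  "join A B = {2 * n | n. n \<in> A} \<union> {2 * n + 1 | n. n \<in> B}"

text \<open>Binary strings of length l coded as pairs (l, canonical index of the set of positions
  carrying 1).\<close>
definition strcode :: "nat \<Rightarrow> nat set \<Rightarrow> nat" where
  "strcode l S = prod_encode (l, set_encode S)"

definition inf_bin_tree :: "nat set \<Rightarrow> bool" where
  "inf_bin_tree T \<longleftrightarrow>
     (\<forall>c\<in>T. \<exists>l S. S \<subseteq> {..<l} \<and> c = strcode l S)
   \<and> (\<forall>l S k. S \<subseteq> {..<l} \<longrightarrow> strcode l S \<in> T \<longrightarrow> k \<le> l \<longrightarrow> strcode k (S \<inter> {..<k}) \<in> T)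
   \<and> infinite T"

definition is_path :: "nat set \<Rightarrow> nat set \<Rightarrow> bool" where
  "is_path P T \<longleftrightarrow> (\<forall>l. strcode l (P \<inter> {..<l}) \<in> T)"

definition scott_set :: "nat set set \<Rightarrow> bool" where
  "scott_set S \<longleftrightarrow>
     (\<forall>A\<in>S. \<forall>B. turing_red B A \<longrightarrow> B \<in> S)
   \<and> (\<forall>A\<in>S. \<forall>B\<in>S. join A B \<in> S)
   \<and> (\<forall>T\<in>S. inf_bin_tree T \<longrightarrow> (\<exists>P\<in>S. is_path P T))"

definition upward_closed :: "nat set set \<Rightarrow> bool" where
  "upward_closed \<A> \<longleftrightarrow> (\<forall>X Y. X \<in> \<A> \<longrightarrow> X \<subseteq> Y \<longrightarrow> Y \<in> \<A>)"

text \<open>Sigma01(Z) class of sets: membership of Y is witnessed by a finite prefix of Y,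
  Z-c.e.-ly.\<close>
definition sigma01_class :: "nat set \<Rightarrow> nat set set \<Rightarrow> bool" where
  "sigma01_class Z \<U> \<longleftrightarrow>
     (\<exists>p. PR 4 p \<and> \<U> = {Y. \<exists>l m. p [l, seg Z l, seg Y l, m] = 0})"

definition effective_enum :: "(nat set \<Rightarrow> nat \<Rightarrow> nat set set) \<Rightarrow> bool" where
  "effective_enum U \<longleftrightarrow>
     (\<exists>p. PR 5 p \<and> (\<forall>Z e. U Z e = {Y. \<exists>l m. p [e, l, seg Z l, seg Y l, m] = 0}))
   \<and> (\<forall>Z e. upward_closed (U Z e))
   \<and> (\<forall>Z \<U>. sigma01_class Z \<U> \<and> upward_closed \<U> \<longrightarrow> (\<exists>e. U Z e = \<U>))"

definition largeness :: "nat set set \<Rightarrow> bool" where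
  "largeness \<A> \<longleftrightarrow> \<A> \<noteq> {} \<and> upward_closed \<A>
     \<and> (\<forall>k (Y :: nat \<Rightarrow> nat set). (\<Union>j<k. Y j) = UNIV \<longrightarrow> (\<exists>j<k. Y j \<in> \<A>))"

definition LL :: "nat set \<Rightarrow> nat set set" where
  "LL X = {Y. infinite (Y \<inter> X)}"

definition M_cohesive :: "nat set set \<Rightarrow> nat set set \<Rightarrow> bool" where
  "M_cohesive \<M> \<A> \<longleftrightarrow> (\<forall>X\<in>\<M>. \<A> \<subseteq> LL X \<or> \<A> \<subseteq> LL (- X))"

definition M_minimal :: "(nat set \<Rightarrow> nat \<Rightarrow> nat set set) \<Rightarrow> nat set set \<Rightarrow> nat set set \<Rightarrow> bool" where
  "M_minimal U \<M> \<A> \<longleftrightarrow> (\<forall>X\<in>\<M>. \<forall>e. \<A> \<subseteq> U X e \<or> \<not> largeness (\<A> \<inter> U X e))"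

text \<open>U^M_C for the countable Scott set coded by the sequence X (M = join of the X i).\<close>
definition UMC :: "(nat set \<Rightarrow> nat \<Rightarrow> nat set set) \<Rightarrow> (nat \<Rightarrow> nat set) \<Rightarrow> (nat \<times> nat) set \<Rightarrow> nat set set" where
  "UMC U X C = \<Inter>{U (X i) e | e i. (e, i) \<in> C}"

definition gen_class :: "(nat set \<Rightarrow> nat \<Rightarrow> nat set set) \<Rightarrow> (nat \<Rightarrow> nat set) \<Rightarrow> (nat \<times> nat) set \<Rightarrow> nat set set" where
  "gen_class U X C = \<Inter>{U Z e | e Z. Z \<in> range X \<and> largeness (UMC U X C \<inter> U Z e)}"

end

theory Submission
  imports Defs
begin


definition PRf :: "nat \<Rightarrow> (nat list \<Rightarrow> nat) \<Rightarrow> bool" where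
  "PRf n f \<longleftrightarrow> (\<exists>g. PR n g \<and> (\<forall>xs. length xs = n \<longrightarrow> g xs = f xs))"

lemma PRf_ext: "PRf n f \<Longrightarrow> (\<And>xs. length xs = n \<Longrightarrow> f xs = g xs) \<Longrightarrow> PRf n g"
  unfolding PRf_def by metis

lemma PR_PRf: "PR n f \<Longrightarrow> PRf n f"
  unfolding PRf_def by blast

lemma PRf_zero: "PRf n (\<lambda>_. 0)"
  by (rule PR_PRf, rule PR_zero)

lemma PRf_proj: "i < n \<Longrightarrow> PRf n (\<lambda>xs. xs ! i)"
  by (rule PR_PRf, rule PR_proj)

lemma PRf_list_reps:
  assumes "\<forall>g\<in>set gs. PRf n g"
  shows "\<exists>gs'. length gs' = length gs \<and> (\<forall>g\<in>set gs'. PR n g)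
     \<and> (\<forall>xs. length xs = n \<longrightarrow> map (\<lambda>g. g xs) gs' = map (\<lambda>g. g xs) gs)"
  using assms
proof (induction gs)
  case Nil
  then show ?case by auto
next
  case (Cons g gs)
  then obtain gs' where gs': "length gs' = length gs" "\<forall>g\<in>set gs'. PR n g"
     "\<forall>xs. length xs = n \<longrightarrow> map (\<lambda>g. g xs) gs' = map (\<lambda>g. g xs) gs" by auto
  from Cons.prems obtain h where h: "PR n h" "\<forall>xs. length xs = n \<longrightarrow> h xs = g xs"
    unfolding PRf_def by auto
  show ?case
    by (rule exI[of _ "h # gs'"]) (use gs' h in auto)
qed

lemma PRf_comp:
  assumes "PRf m f" "length gs = m" "\<forall>g\<in>set gs. PRf n g"
  shows "PRf n (\<lambda>xs. f (map (\<lambda>g. g xs) gs))"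
proof -
  obtain f' where f': "PR m f'" "\<forall>xs. length xs = m \<longrightarrow> f' xs = f xs"
    using assms(1) unfolding PRf_def by auto
  obtain gs' where gs': "length gs' = length gs" "\<forall>g\<in>set gs'. PR n g"
     "\<forall>xs. length xs = n \<longrightarrow> map (\<lambda>g. g xs) gs' = map (\<lambda>g. g xs) gs"
    using PRf_list_reps[OF assms(3)] by auto
  have "PR n (\<lambda>xs. f' (map (\<lambda>g. g xs) gs'))"
    using PR_comp[OF f'(1)] gs' assms(2) by auto
  moreover have "\<forall>xs. length xs = n \<longrightarrow> f' (map (\<lambda>g. g xs) gs') = f (map (\<lambda>g. g xs) gs)"
    using f' gs' assms(2) by auto
  ultimately show ?thesis unfolding PRf_def by blast
qed

lemma PRf_rec:
  assumes "PRf n f" "PRf (Suc (Suc n)) g"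
  shows "PRf (Suc n) (\<lambda>xs. rec_nat (f (tl xs)) (\<lambda>k r. g (r # k # tl xs)) (hd xs))"
proof -
  obtain f' where f': "PR n f'" "\<forall>xs. length xs = n \<longrightarrow> f' xs = f xs"
    using assms(1) unfolding PRf_def by auto
  obtain g' where g': "PR (Suc (Suc n)) g'" "\<forall>xs. length xs = Suc (Suc n) \<longrightarrow> g' xs = g xs"
    using assms(2) unfolding PRf_def by auto
  have "PR (Suc n) (\<lambda>xs. rec_nat (f' (tl xs)) (\<lambda>k r. g' (r # k # tl xs)) (hd xs))"
    by (rule PR_rec[OF f'(1) g'(1)])
  moreover have "rec_nat (f' (tl xs)) (\<lambda>k r. g' (r # k # tl xs)) x
       = rec_nat (f (tl xs)) (\<lambda>k r. g (r # k # tl xs)) x" if "length xs = Suc n" for xs x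
    using that f' g' by (induction x) auto
  ultimately show ?thesis unfolding PRf_def by blast
qed

lemma PRf_Suc: "PRf n a \<Longrightarrow> PRf n (\<lambda>xs. Suc (a xs))"
  using PRf_comp[OF PR_PRf[OF PR_succ], of "[a]" n] by simp

lemma PRf_const: "PRf n (\<lambda>_. c)"
  by (induction c) (auto intro: PRf_zero dest: PRf_Suc)

lemma PRf_app1: "PRf 1 f \<Longrightarrow> PRf n a \<Longrightarrow> PRf n (\<lambda>xs. f [a xs])"
  using PRf_comp[of 1 f "[a]" n] by simp
lemma PRf_app2: "PRf 2 f \<Longrightarrow> PRf n a \<Longrightarrow> PRf n b \<Longrightarrow> PRf n (\<lambda>xs. f [a xs, b xs])"
  using PRf_comp[of 2 f "[a,b]" n] by simp
lemma PRf_app3: "PRf 3 f \<Longrightarrow> PRf n a \<Longrightarrow> PRf n b \<Longrightarrow> PRf n c \<Longrightarrow> PRf n (\<lambda>xs. f [a xs, b xs, c xs])"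
  using PRf_comp[of 3 f "[a,b,c]" n] by simp
lemma PRf_app4: "PRf 4 f \<Longrightarrow> PRf n a \<Longrightarrow> PRf n b \<Longrightarrow> PRf n c \<Longrightarrow> PRf n d
   \<Longrightarrow> PRf n (\<lambda>xs. f [a xs, b xs, c xs, d xs])"
  using PRf_comp[of 4 f "[a,b,c,d]" n] by simp
lemma PRf_app5: "PRf 5 f \<Longrightarrow> PRf n a \<Longrightarrow> PRf n b \<Longrightarrow> PRf n c \<Longrightarrow> PRf n d \<Longrightarrow> PRf n e
   \<Longrightarrow> PRf n (\<lambda>xs. f [a xs, b xs, c xs, d xs, e xs])"
  using PRf_comp[of 5 f "[a,b,c,d,e]" n] by simp

lemma PRf_tl: "PRf n f \<Longrightarrow> PRf (Suc n) (\<lambda>ys. f (tl ys))"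
proof -
  assume a: "PRf n f"
  have h: "PRf (Suc n) (\<lambda>ys. f (map (\<lambda>g. g ys) (map (\<lambda>i ys. ys ! Suc i) [0..<n])))"
    by (rule PRf_comp[OF a]) (auto intro: PRf_proj)
  then show ?thesis
    by (rule PRf_ext) (auto simp: length_Suc_conv comp_def map_nth)
qed

lemma PRf_hd: "PRf (Suc n) hd"
  by (rule PRf_ext[OF PRf_proj[of 0 "Suc n"]]) (auto simp: length_Suc_conv)

lemma PRf_cons: "PRf (Suc n) f \<Longrightarrow> PRf n B \<Longrightarrow> PRf n (\<lambda>xs. f (B xs # xs))"
proof -
  assume a: "PRf (Suc n) f" "PRf n B"
  have "PRf n (\<lambda>xs. f (map (\<lambda>g. g xs) (B # map (\<lambda>i xs. xs ! i) [0..<n])))"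
    by (rule PRf_comp[OF a(1)]) (use a(2) in \<open>auto intro: PRf_proj\<close>)
  then show ?thesis
    by (rule PRf_ext) (auto simp: comp_def map_nth)
qed

lemma len1: "length xs = 1 \<Longrightarrow> \<exists>a. xs = [a]"
  by (cases xs) auto
lemma len2: "length xs = 2 \<Longrightarrow> \<exists>a b. xs = [a, b]"
  by (cases xs; cases "tl xs") (auto simp: numeral_2_eq_2)
lemma len3: "length xs = 3 \<Longrightarrow> \<exists>a b c. xs = [a, b, c]"
  by (cases xs; cases "tl xs"; cases "tl (tl xs)") (auto simp: numeral_3_eq_3)

lemma PRf_add2: "PRf 2 (\<lambda>xs. xs ! 0 + xs ! 1)"
proof -
  have h: "PRf (Suc 1) (\<lambda>xs. rec_nat ((\<lambda>ys. ys ! 0) (tl xs)) (\<lambda>k r. (\<lambda>zs. Suc (zs ! 0)) (r # k # tl xs)) (hd xs))"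
    by (rule PRf_rec) (auto intro!: PRf_Suc PRf_proj)
  have r: "rec_nat b (\<lambda>k r. Suc r) a = a + b" for a b :: nat by (induction a) auto
  show ?thesis
    by (rule PRf_ext[OF h[unfolded Suc_1]]) (auto simp: r dest!: len2)
qed

lemma PRf_add: "PRf n a \<Longrightarrow> PRf n b \<Longrightarrow> PRf n (\<lambda>xs. a xs + b xs)"
  using PRf_app2[OF PRf_add2, of n a b] by simp

lemma PRf_mult2: "PRf 2 (\<lambda>xs. xs ! 0 * xs ! 1)"
proof -
  have h: "PRf (Suc 1) (\<lambda>xs. rec_nat ((\<lambda>ys. 0) (tl xs)) (\<lambda>k r. (\<lambda>zs. zs ! 0 + zs ! 2) (r # k # tl xs)) (hd xs))"
    by (rule PRf_rec) (auto intro!: PRf_add PRf_proj PRf_const)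
  have r: "rec_nat 0 (\<lambda>k r. r + b) a = a * b" for a b :: nat by (induction a) auto
  show ?thesis
    by (rule PRf_ext[OF h[unfolded Suc_1]]) (auto simp: r dest!: len2)
qed

lemma PRf_mult: "PRf n a \<Longrightarrow> PRf n b \<Longrightarrow> PRf n (\<lambda>xs. a xs * b xs)"
  using PRf_app2[OF PRf_mult2, of n a b] by simp

lemma PRf_pred1: "PRf 1 (\<lambda>xs. xs ! 0 - 1)"
proof -
  have h: "PRf (Suc 0) (\<lambda>xs. rec_nat ((\<lambda>ys. 0) (tl xs)) (\<lambda>k r. (\<lambda>zs. zs ! 1) (r # k # tl xs)) (hd xs))"
    by (rule PRf_rec) (auto intro!: PRf_proj PRf_const)
  have r: "rec_nat 0 (\<lambda>k r. k) (hd xs) = xs ! 0 - Suc 0" if "length xs = Suc 0" for xs :: "nat list" using that proof (cases xs)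
    case (Cons a t) then show ?thesis using that by (cases a) auto qed auto
  show ?thesis
    by (rule PRf_ext[OF h[folded One_nat_def]]) (auto simp: r)
qed

lemma PRf_monus2: "PRf 2 (\<lambda>xs. xs ! 1 - xs ! 0)"
proof -
  have h: "PRf (Suc 1) (\<lambda>xs. rec_nat ((\<lambda>ys. ys ! 0) (tl xs)) (\<lambda>k r. (\<lambda>zs. zs ! 0 - 1) (r # k # tl xs)) (hd xs))"
    by (rule PRf_rec[OF PRf_proj], simp, rule PRf_ext[OF PRf_app1[OF PRf_pred1 PRf_proj[of 0]]], auto)
  have r: "rec_nat b (\<lambda>k r. r - Suc 0) a = b - a" for a b :: nat by (induction a) auto
  show ?thesis
    by (rule PRf_ext[OF h[unfolded Suc_1]]) (auto simp: r dest!: len2)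
qed

lemma PRf_sub: "PRf n a \<Longrightarrow> PRf n b \<Longrightarrow> PRf n (\<lambda>xs. a xs - b xs)"
  using PRf_app2[OF PRf_monus2, of n b a] by simp

lemma PRf_pow2: "PRf 2 (\<lambda>xs. xs ! 1 ^ xs ! 0)"
proof -
  have h: "PRf (Suc 1) (\<lambda>xs. rec_nat ((\<lambda>ys. 1) (tl xs)) (\<lambda>k r. (\<lambda>zs. zs ! 0 * zs ! 2) (r # k # tl xs)) (hd xs))"
    by (rule PRf_rec) (auto intro!: PRf_mult PRf_proj PRf_const)
  have r: "rec_nat (Suc 0) (\<lambda>k r. r * b) a = b ^ a" for a b :: nat by (induction a) auto
  show ?thesis
    by (rule PRf_ext[OF h[unfolded Suc_1]]) (auto simp: r dest!: len2)
qed

lemma PRf_pow: "PRf n a \<Longrightarrow> PRf n b \<Longrightarrow> PRf n (\<lambda>xs. a xs ^ b xs)"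
  using PRf_app2[OF PRf_pow2, of n b a] by simp

lemma PRf_mod2: "PRf 2 (\<lambda>xs. xs ! 0 mod xs ! 1)"
proof -
  have h: "PRf (Suc 1) (\<lambda>xs. rec_nat ((\<lambda>ys. 0) (tl xs))
      (\<lambda>k r. (\<lambda>zs. (1 - (Suc (zs ! 0) - zs ! 2 + (zs ! 2 - Suc (zs ! 0)))) * 0 +
                    (1 - (1 - (Suc (zs ! 0) - zs ! 2 + (zs ! 2 - Suc (zs ! 0))))) * Suc (zs ! 0)) (r # k # tl xs)) (hd xs))"
    by (rule PRf_rec) (auto intro!: PRf_mult PRf_add PRf_sub PRf_Suc PRf_proj PRf_const)
  have r: "rec_nat 0
            (\<lambda>k r. Suc ((Suc 0 - (Suc 0 - (Suc r - b + (b - Suc r)))) * r) -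
                   (Suc 0 - (Suc r - b + (b - Suc r)))) a = a mod b" for a b :: nat
  proof (induction a)
    case (Suc a)
    have e: "(Suc r - b + (b - Suc r) = 0) = (Suc r = b)" for r by auto
    show ?case using Suc by (cases "Suc (a mod b) = b") (auto simp: mod_Suc)
  qed auto
  show ?thesis
    by (rule PRf_ext[OF h[unfolded Suc_1]]) (auto simp: r dest!: len2)
qed

lemma PRf_mod: "PRf n a \<Longrightarrow> PRf n b \<Longrightarrow> PRf n (\<lambda>xs. a xs mod b xs)"
  using PRf_app2[OF PRf_mod2, of n a b] by simp

definition PRp :: "nat \<Rightarrow> (nat list \<Rightarrow> bool) \<Rightarrow> bool" where
  "PRp n P \<longleftrightarrow> PRf n (\<lambda>xs. if P xs then 1 else 0)"

lemma PRp_le: assumes "PRf n a" "PRf n b" shows "PRp n (\<lambda>xs. a xs \<le> b xs)"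
  unfolding PRp_def
  by (rule PRf_ext[OF PRf_sub[OF PRf_const[of n 1] PRf_sub[OF assms]]]) auto

lemma PRp_less: "PRf n a \<Longrightarrow> PRf n b \<Longrightarrow> PRp n (\<lambda>xs. a xs < b xs)"
  using PRp_le[OF PRf_Suc] by (simp add: Suc_le_eq)

lemma PRp_and: assumes "PRp n P" "PRp n Q" shows "PRp n (\<lambda>xs. P xs \<and> Q xs)"
  using assms unfolding PRp_def
  by - (rule PRf_ext[OF PRf_mult[OF assms[unfolded PRp_def]]], auto)

lemma PRp_not: assumes "PRp n P" shows "PRp n (\<lambda>xs. \<not> P xs)"
  unfolding PRp_def
  by (rule PRf_ext[OF PRf_sub[OF PRf_const[of n 1] assms[unfolded PRp_def]]]) auto

lemma PRp_or: "PRp n P \<Longrightarrow> PRp n Q \<Longrightarrow> PRp n (\<lambda>xs. P xs \<or> Q xs)"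
  using PRp_not[OF PRp_and[OF PRp_not PRp_not]] by simp

lemma PRp_imp: "PRp n P \<Longrightarrow> PRp n Q \<Longrightarrow> PRp n (\<lambda>xs. P xs \<longrightarrow> Q xs)"
  using PRp_or[OF PRp_not] by simp

lemma PRp_eq: "PRf n a \<Longrightarrow> PRf n b \<Longrightarrow> PRp n (\<lambda>xs. a xs = b xs)"
  using PRp_and[OF PRp_le PRp_le, of n a b b a] by (simp add: order_eq_iff)

lemma PRp_const: "PRp n (\<lambda>_. b)"
  unfolding PRp_def by (cases b) (auto intro: PRf_const)

lemma PRf_if: assumes "PRp n P" "PRf n a" "PRf n b" shows "PRf n (\<lambda>xs. if P xs then a xs else b xs)"
  by (rule PRf_ext[OF PRf_add[OF PRf_mult[OF assms(1)[unfolded PRp_def] assms(2)]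
     PRf_mult[OF PRf_sub[OF PRf_const[of n 1] assms(1)[unfolded PRp_def]] assms(3)]]]) auto

lemma PRf_bsum0: "PRf (Suc n) F \<Longrightarrow> PRf (Suc n) (\<lambda>ys. \<Sum>i<hd ys. F (i # tl ys))"
proof -
  assume F: "PRf (Suc n) F"
  have h: "PRf (Suc n) (\<lambda>xs. rec_nat ((\<lambda>_. 0) (tl xs)) (\<lambda>k r. (\<lambda>zs. zs ! 0 + F (tl zs)) (r # k # tl xs)) (hd xs))"
    by (rule PRf_rec[OF PRf_const PRf_add[OF PRf_proj PRf_tl[OF F]]]) simp
  have r: "rec_nat 0 (\<lambda>k r. r + F (k # t)) x = (\<Sum>i<x. F (i # t))" for x t by (induction x) auto
  show ?thesis by (rule PRf_ext[OF h]) (simp add: r)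
qed

lemma PRf_bsum: "PRf n B \<Longrightarrow> PRf (Suc n) (\<lambda>ys. F (hd ys) (tl ys)) \<Longrightarrow> PRf n (\<lambda>xs. \<Sum>i<B xs. F i xs)"
  using PRf_cons[OF PRf_bsum0, of n "\<lambda>ys. F (hd ys) (tl ys)" B] by simp

lemma PRp_bex: "PRf n B \<Longrightarrow> PRp (Suc n) (\<lambda>ys. P (hd ys) (tl ys)) \<Longrightarrow> PRp n (\<lambda>xs. \<exists>i<B xs. P i xs)"
  unfolding PRp_def
proof -
  assume a: "PRf n B" "PRf (Suc n) (\<lambda>xs. if P (hd xs) (tl xs) then 1 else 0)"
  have h: "PRf n (\<lambda>xs. 1 - (1 - (\<Sum>i<B xs. (\<lambda>i xs. if P i xs then 1 else 0) i xs)))"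
    by (rule PRf_sub[OF PRf_const PRf_sub[OF PRf_const PRf_bsum[OF a(1)]]]) (use a(2) in simp)
  show "PRf n (\<lambda>xs. if \<exists>i<B xs. P i xs then 1 else 0)"
  proof (rule PRf_ext[OF h])
    fix xs :: "nat list"
    have iff: "(\<Sum>i<B xs. (if P i xs then 1 else 0 :: nat)) \<noteq> 0 \<longleftrightarrow> (\<exists>i<B xs. P i xs)"
      by (subst sum_eq_0_iff) auto
    then show "1 - (1 - (\<Sum>i<B xs. (\<lambda>i xs. if P i xs then 1 else 0) i xs)) = (if \<exists>i<B xs. P i xs then 1 else (0::nat))"
    proof (cases "(\<Sum>i<B xs. (if P i xs then 1 else 0 :: nat)) = 0")
      case True
      then show ?thesis using iff by simp
    next
      case False
      then have "(\<exists>i<B xs. P i xs)" using iff by blast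
      moreover define S where "S = (\<Sum>i<B xs. (if P i xs then 1 else 0 :: nat))"
      moreover have "S \<noteq> 0" using False unfolding S_def[symmetric] .
      ultimately show ?thesis unfolding S_def[symmetric] by simp
    qed
  qed
qed

lemma PRp_ball: "PRf n B \<Longrightarrow> PRp (Suc n) (\<lambda>ys. P (hd ys) (tl ys)) \<Longrightarrow> PRp n (\<lambda>xs. \<forall>i<B xs. P i xs)"
  using PRp_not[OF PRp_bex[of n B "\<lambda>i xs. \<not> P i xs"]] PRp_not by auto

definition lookup :: "nat list \<Rightarrow> nat \<Rightarrow> nat" where
  "lookup es j = (if j < length es then es ! j else 0)"

lemma PRf_lookup: "PRf n a \<Longrightarrow> PRf n (\<lambda>xs. lookup es (a xs))"
proof (induction es arbitrary: a)
  case Nil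
  then show ?case by (simp add: lookup_def PRf_const)
next
  case (Cons e es)
  have "PRf n (\<lambda>xs. if a xs = 0 then e else lookup es (a xs - 1))"
    by (intro PRf_if PRp_eq Cons PRf_const PRf_sub)
  then show ?case
    by (rule PRf_ext) (auto simp: lookup_def nth_Cons')
qed

lemma PRf_triangle1: "PRf 1 (\<lambda>xs. triangle (xs ! 0))"
proof -
  have h: "PRf (Suc 0) (\<lambda>xs. rec_nat ((\<lambda>_. 0) (tl xs)) (\<lambda>k r. (\<lambda>zs. zs ! 0 + Suc (zs ! 1)) (r # k # tl xs)) (hd xs))"
    by (rule PRf_rec[OF PRf_const PRf_add[OF PRf_proj PRf_Suc[OF PRf_proj]]]) auto
  have r: "rec_nat 0 (\<lambda>k r. Suc (r + k)) x = triangle x" for x by (induction x) auto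
  show ?thesis by (rule PRf_ext[OF h[folded One_nat_def]]) (auto simp: r length_Suc_conv)
qed

lemma PRf_pe: "PRf n a \<Longrightarrow> PRf n b \<Longrightarrow> PRf n (\<lambda>xs. prod_encode (a xs, b xs))"
  unfolding prod_encode_def
  using PRf_add[OF PRf_app1[OF PRf_triangle1 PRf_add]] by simp

lemma PRf_tl1: "i < n \<Longrightarrow> PRf (Suc (n)) (\<lambda>ys. tl (ys) ! i)"
  by (rule PRf_ext[OF PRf_proj[of "Suc (i)"]]) (auto simp: nth_tl)

lemma PRf_tl2: "i < n \<Longrightarrow> PRf (Suc (Suc (n))) (\<lambda>ys. tl (tl (ys)) ! i)"
  by (rule PRf_ext[OF PRf_proj[of "Suc (Suc (i))"]]) (auto simp: nth_tl)

lemma PRf_tl3: "i < n \<Longrightarrow> PRf (Suc (Suc (Suc (n)))) (\<lambda>ys. tl (tl (tl (ys))) ! i)"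
  by (rule PRf_ext[OF PRf_proj[of "Suc (Suc (Suc (i)))"]]) (auto simp: nth_tl)

lemma PRf_tl4: "i < n \<Longrightarrow> PRf (Suc (Suc (Suc (Suc (n))))) (\<lambda>ys. tl (tl (tl (tl (ys)))) ! i)"
  by (rule PRf_ext[OF PRf_proj[of "Suc (Suc (Suc (Suc (i))))"]]) (auto simp: nth_tl)

lemma PRf_tl5: "i < n \<Longrightarrow> PRf (Suc (Suc (Suc (Suc (Suc (n)))))) (\<lambda>ys. tl (tl (tl (tl (tl (ys))))) ! i)"
  by (rule PRf_ext[OF PRf_proj[of "Suc (Suc (Suc (Suc (Suc (i)))))"]]) (auto simp: nth_tl)

lemma PRf_tl6: "i < n \<Longrightarrow> PRf (Suc (Suc (Suc (Suc (Suc (Suc (n))))))) (\<lambda>ys. tl (tl (tl (tl (tl (tl (ys)))))) ! i)"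
  by (rule PRf_ext[OF PRf_proj[of "Suc (Suc (Suc (Suc (Suc (Suc (i))))))"]]) (auto simp: nth_tl)

lemma PRf_tl7: "i < n \<Longrightarrow> PRf (Suc (Suc (Suc (Suc (Suc (Suc (Suc (n)))))))) (\<lambda>ys. tl (tl (tl (tl (tl (tl (tl (ys))))))) ! i)"
  by (rule PRf_ext[OF PRf_proj[of "Suc (Suc (Suc (Suc (Suc (Suc (Suc (i)))))))"]]) (auto simp: nth_tl)

lemma PRf_tl8: "i < n \<Longrightarrow> PRf (Suc (Suc (Suc (Suc (Suc (Suc (Suc (Suc (n))))))))) (\<lambda>ys. tl (tl (tl (tl (tl (tl (tl (tl (ys)))))))) ! i)"
  by (rule PRf_ext[OF PRf_proj[of "Suc (Suc (Suc (Suc (Suc (Suc (Suc (Suc (i))))))))"]]) (auto simp: nth_tl)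

lemma PRf_tl9: "i < n \<Longrightarrow> PRf (Suc (Suc (Suc (Suc (Suc (Suc (Suc (Suc (Suc (n)))))))))) (\<lambda>ys. tl (tl (tl (tl (tl (tl (tl (tl (tl (ys))))))))) ! i)"
  by (rule PRf_ext[OF PRf_proj[of "Suc (Suc (Suc (Suc (Suc (Suc (Suc (Suc (Suc (i)))))))))"]]) (auto simp: nth_tl)

lemma PRf_hd1: "PRf (Suc (Suc (n))) (\<lambda>ys. hd (tl (ys)))"
  by (rule PRf_ext[OF PRf_proj[of "Suc (0)"]]) (auto simp: length_Suc_conv)

lemma PRf_hd2: "PRf (Suc (Suc (Suc (n)))) (\<lambda>ys. hd (tl (tl (ys))))"
  by (rule PRf_ext[OF PRf_proj[of "Suc (Suc (0))"]]) (auto simp: length_Suc_conv)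

lemma PRf_hd3: "PRf (Suc (Suc (Suc (Suc (n))))) (\<lambda>ys. hd (tl (tl (tl (ys)))))"
  by (rule PRf_ext[OF PRf_proj[of "Suc (Suc (Suc (0)))"]]) (auto simp: length_Suc_conv)

lemma PRf_hd4: "PRf (Suc (Suc (Suc (Suc (Suc (n)))))) (\<lambda>ys. hd (tl (tl (tl (tl (ys))))))"
  by (rule PRf_ext[OF PRf_proj[of "Suc (Suc (Suc (Suc (0))))"]]) (auto simp: length_Suc_conv)

lemma PRf_hd5: "PRf (Suc (Suc (Suc (Suc (Suc (Suc (n))))))) (\<lambda>ys. hd (tl (tl (tl (tl (tl (ys)))))))"
  by (rule PRf_ext[OF PRf_proj[of "Suc (Suc (Suc (Suc (Suc (0)))))"]]) (auto simp: length_Suc_conv)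

lemma PRf_hd6: "PRf (Suc (Suc (Suc (Suc (Suc (Suc (Suc (n)))))))) (\<lambda>ys. hd (tl (tl (tl (tl (tl (tl (ys))))))))"
  by (rule PRf_ext[OF PRf_proj[of "Suc (Suc (Suc (Suc (Suc (Suc (0))))))"]]) (auto simp: length_Suc_conv)

lemma PRf_hd7: "PRf (Suc (Suc (Suc (Suc (Suc (Suc (Suc (Suc (n))))))))) (\<lambda>ys. hd (tl (tl (tl (tl (tl (tl (tl (ys)))))))))"
  by (rule PRf_ext[OF PRf_proj[of "Suc (Suc (Suc (Suc (Suc (Suc (Suc (0)))))))"]]) (auto simp: length_Suc_conv)

lemma PRf_hd8: "PRf (Suc (Suc (Suc (Suc (Suc (Suc (Suc (Suc (Suc (n)))))))))) (\<lambda>ys. hd (tl (tl (tl (tl (tl (tl (tl (tl (ys))))))))))"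
  by (rule PRf_ext[OF PRf_proj[of "Suc (Suc (Suc (Suc (Suc (Suc (Suc (Suc (0))))))))"]]) (auto simp: length_Suc_conv)

lemmas PR_intros = PRf_const PRf_proj PRf_hd PRf_add PRf_sub PRf_mult PRf_pow PRf_mod PRf_Suc
  PRf_if PRf_bsum PRf_lookup PRf_pe
  PRp_le PRp_less PRp_eq PRp_and PRp_or PRp_not PRp_imp PRp_bex PRp_ball PRp_const
  PRf_tl1 PRf_tl2 PRf_tl3 PRf_tl4 PRf_tl5 PRf_tl6 PRf_tl7 PRf_tl8 PRf_tl9 PRf_hd1 PRf_hd2 PRf_hd3 PRf_hd4 PRf_hd5 PRf_hd6 PRf_hd7 PRf_hd8



lemma set_decode_bit: "n \<in> set_decode x \<longleftrightarrow> bit x n"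
  unfolding set_decode_def bit_iff_odd by simp

lemma bit_set_encode: "finite S \<Longrightarrow> bit (set_encode S) n \<longleftrightarrow> n \<in> S"
proof -
  assume "finite S"
  then have "set_decode (set_encode S) = S" by (rule set_encode_inverse)
  then show ?thesis using set_decode_bit[of n "set_encode S"] by simp
qed

lemma bitp_iff: "(2 ^ i \<le> (x::nat) mod 2 ^ Suc i) \<longleftrightarrow> bit x i"
proof -
  have e: "x mod 2 ^ Suc i = 2 ^ i * (x div 2 ^ i mod 2) + x mod 2 ^ i"
    by (subst power_Suc2, rule mod_mult2_eq)
  have r: "x mod 2 ^ i < 2 ^ i" by simp
  have b: "bit x i \<longleftrightarrow> x div 2 ^ i mod 2 = 1"
    unfolding bit_iff_odd odd_iff_mod_2_eq_one ..
  have "x div 2 ^ i mod 2 = 0 \<or> x div 2 ^ i mod 2 = 1" by arith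
  then show ?thesis
  proof
    assume z: "x div 2 ^ i mod 2 = 0"
    then show ?thesis unfolding b e using r by (simp add: not_le)
  next
    assume o: "x div 2 ^ i mod 2 = 1"
    then show ?thesis unfolding b e by simp
  qed
qed

lemma seg_bit: "bit (seg Z L) n \<longleftrightarrow> n \<in> Z \<and> n < L"
  unfolding seg_def by (subst bit_set_encode) auto

lemma bit_mod_pow: "bit ((x::nat) mod 2 ^ l) n \<longleftrightarrow> n < l \<and> bit x n"
  unfolding take_bit_eq_mod[symmetric] by (rule bit_take_bit_iff)

lemma seg_mod: "l \<le> L \<Longrightarrow> seg Z L mod 2 ^ l = seg Z l"
  by (rule bit_eqI) (auto simp only: bit_mod_pow seg_bit)

lemma set_encode_less: "S \<subseteq> {..<l} \<Longrightarrow> set_encode S < 2 ^ l"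
proof -
  assume S: "S \<subseteq> {..<l}"
  then have f: "finite S" using finite_subset by blast
  have e: "set_encode S mod 2 ^ l = set_encode S"
    by (rule bit_eqI) (use S f in \<open>auto simp only: bit_mod_pow bit_set_encode\<close>)
  have less: "set_encode S mod 2 ^ l < 2 ^ l" by simp
  show ?thesis using less unfolding e .
qed

lemma seg_sum: "seg S l = (\<Sum>i<l. if i \<in> S then 2 ^ i else 0)"
proof (induction l)
  case 0
  then show ?case by (simp add: seg_def)
next
  case (Suc l)
  show ?case
  proof (cases "l \<in> S")
    case True
    then have "S \<inter> {..<Suc l} = insert l (S \<inter> {..<l})" by auto
    then show ?thesis using True Suc by (simp add: seg_def)
  next
    case False
    then have "S \<inter> {..<Suc l} = S \<inter> {..<l}" by (auto simp: less_Suc_eq)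
    then show ?thesis using False Suc by (simp add: seg_def)
  qed
qed

lemma seg_bitp: "(2 ^ n \<le> seg Z L mod 2 ^ Suc n) \<longleftrightarrow> n \<in> Z \<and> n < L"
  by (subst bitp_iff) (rule seg_bit)

lemma set_decode_sub: "s < 2 ^ l \<Longrightarrow> set_decode s \<subseteq> {..<l}"
proof
  fix n assume s: "s < 2 ^ l" and n: "n \<in> set_decode s"
  then have "bit s n" by (simp add: set_decode_def bit_iff_odd)
  show "n \<in> {..<l}"
  proof (rule ccontr)
    assume "n \<notin> {..<l}"
    then have "l \<le> n" by simp
    then have "(2::nat) ^ l \<le> 2 ^ n" by (rule power_increasing) simp
    then have "s < 2 ^ n" using s by linarith
    then have "s div 2 ^ n = 0" by (rule div_less)
    then show False using \<open>bit s n\<close> by (simp add: bit_iff_odd)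
  qed
qed

lemma sigma01_classI: assumes "PRf 4 q" "W = {Y. \<exists>l m. q [l, seg Z l, seg Y l, m] = 0}" shows "sigma01_class Z W"
proof -
  obtain g where g: "PR 4 g" "\<forall>xs. length xs = 4 \<longrightarrow> g xs = q xs" using assms(1) unfolding PRf_def by auto
  have "\<forall>a b c d. g [a,b,c,d] = q [a,b,c,d]" using g(2) by simp
  then show ?thesis unfolding sigma01_class_def assms(2) using g(1) by (intro exI[of _ g] conjI) simp_all
qed

lemma sigma01_setI: assumes "PRf 4 q" "W = {n. \<exists>l m. q [l, seg Z l, n, m] = 0}" shows "sigma01_set Z W"
proof -
  obtain g where g: "PR 4 g" "\<forall>xs. length xs = 4 \<longrightarrow> g xs = q xs" using assms(1) unfolding PRf_def by auto
  have "\<forall>a b c d. g [a,b,c,d] = q [a,b,c,d]" using g(2) by simp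
  then show ?thesis unfolding sigma01_set_def assms(2) using g(1) by (intro exI[of _ g] conjI) simp_all
qed

definition red :: "nat set \<Rightarrow> nat set \<Rightarrow> bool" where
  "red A B \<longleftrightarrow> (\<exists>f b. PRf 2 f \<and> PRf 1 b \<and> (\<forall>l. seg A l = f [l, seg B (b [l])]))"

lemma red_refl: "red A A"
  unfolding red_def
  by (rule exI[of _ "\<lambda>xs. xs ! 1"], rule exI[of _ "\<lambda>xs. xs ! 0"]) (auto intro: PRf_proj)

lemma red_trans: "red A B \<Longrightarrow> red B C \<Longrightarrow> red A C"
proof -
  assume "red A B" "red B C"
  then obtain f b g c where fb: "PRf 2 f" "PRf 1 b" "\<forall>l. seg A l = f [l, seg B (b [l])]"
    and gc: "PRf 2 g" "PRf 1 c" "\<forall>l. seg B l = g [l, seg C (c [l])]"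
    unfolding red_def by blast
  have "PRf 2 (\<lambda>xs. f [xs ! 0, g [b [xs ! 0], xs ! 1]])"
    by (intro PR_intros PRf_app2[OF fb(1)] PRf_app2[OF gc(1)] PRf_app1[OF fb(2)] PRf_app1[OF gc(2)]) simp_all
  moreover have "PRf 1 (\<lambda>xs. c [b [xs ! 0]])"
    by (intro PR_intros PRf_app2[OF fb(1)] PRf_app2[OF gc(1)] PRf_app1[OF fb(2)] PRf_app1[OF gc(2)]) simp_all
  moreover have "\<forall>l. seg A l = f [[l, seg C (c [b [[l] ! 0]])] ! 0, g [b [[l, seg C (c [b [[l] ! 0]])] ! 0], [l, seg C (c [b [[l] ! 0]])] ! 1]]"
    using fb gc by simp
  ultimately show ?thesis unfolding red_def by blast
qed

lemma red_join1: "red A (join A B)"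
proof -
  have "PRf 2 (\<lambda>xs. \<Sum>i<xs ! 0. if 2 ^ (2 * i) \<le> xs ! 1 mod 2 ^ Suc (2 * i) then 2 ^ i else 0)"
    by (intro PR_intros) simp_all
  moreover have "PRf 1 (\<lambda>xs. 2 * xs ! 0)"
    by (intro PR_intros) simp_all
  moreover have "seg A l = (\<Sum>i<l. if 2 ^ (2 * i) \<le> seg (join A B) (2 * l) mod 2 ^ Suc (2 * i) then 2 ^ i else 0)" for l
  proof -
    have "2 * i \<in> join A B \<longleftrightarrow> i \<in> A" for i by (auto simp: join_def) presburger
    then show ?thesis by (subst seg_sum) (intro sum.cong, auto simp: seg_bitp simp del: power_Suc)
  qed
  ultimately show ?thesis unfolding red_def by (intro exI conjI) auto
qed

lemma red_join2: "red B (join A B)"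
proof -
  have "PRf 2 (\<lambda>xs. \<Sum>i<xs ! 0. if 2 ^ (2 * i + 1) \<le> xs ! 1 mod 2 ^ Suc (2 * i + 1) then 2 ^ i else 0)"
    by (intro PR_intros) simp_all
  moreover have "PRf 1 (\<lambda>xs. 2 * xs ! 0)"
    by (intro PR_intros) simp_all
  moreover have "seg B l = (\<Sum>i<l. if 2 ^ (2 * i + 1) \<le> seg (join A B) (2 * l) mod 2 ^ Suc (2 * i + 1) then 2 ^ i else 0)" for l
  proof -
    have "2 * i + 1 \<in> join A B \<longleftrightarrow> i \<in> B" for i by (auto simp: join_def) presburger
    then show ?thesis by (subst seg_sum) (intro sum.cong, auto simp: seg_bitp simp del: power_Suc)
  qed
  ultimately show ?thesis unfolding red_def by (intro exI conjI) auto
qed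

lemma class_red:
  assumes "red A B" "sigma01_class A W"
  shows "sigma01_class B W"
proof -
  obtain f b where fb: "PRf 2 f" "PRf 1 b" "\<forall>l. seg A l = f [l, seg B (b [l])]"
    using assms(1) unfolding red_def by blast
  obtain p where p: "PR 4 p" "W = {Y. \<exists>l m. p [l, seg A l, seg Y l, m] = 0}"
    using assms(2) unfolding sigma01_class_def by blast
  have pf: "PRf 4 p" using p(1) by (rule PR_PRf)
  show ?thesis
  proof (rule sigma01_classI)
    show "PRf 4 (\<lambda>xs. if \<exists>l<Suc (xs ! 0). b [l] \<le> xs ! 0 \<and>
        p [l, f [l, xs ! 1 mod 2 ^ (b [l])], xs ! 2 mod 2 ^ l, xs ! 3] = 0 then 0 else 1)"
      by (intro PR_intros PRf_app2[OF fb(1)] PRf_app1[OF fb(2)] PRf_app4[OF pf]) simp_all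
    show "W = {Y. \<exists>L m. (\<lambda>xs. if \<exists>l<Suc (xs ! 0). b [l] \<le> xs ! 0 \<and>
        p [l, f [l, xs ! 1 mod 2 ^ (b [l])], xs ! 2 mod 2 ^ l, xs ! 3] = 0 then 0 else (1::nat))
        [L, seg B L, seg Y L, m] = 0}" (is "_ = ?R")
    proof (rule set_eqI, rule iffI)
      fix Y assume "Y \<in> W"
      then obtain l m where lm: "p [l, seg A l, seg Y l, m] = 0" using p by auto
      let ?L = "max l (b [l])"
      have "p [l, f [l, seg B ?L mod 2 ^ (b [l])], seg Y ?L mod 2 ^ l, m] = 0"
        using lm fb(3) by (simp add: seg_mod)
      then have "\<exists>l'<Suc ?L. b [l'] \<le> ?L \<and> p [l', f [l', seg B ?L mod 2 ^ (b [l'])], seg Y ?L mod 2 ^ l', m] = 0"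
        by (intro exI[of _ l]) auto
      then show "Y \<in> ?R" by (simp only: mem_Collect_eq) (rule exI[where x="?L"], rule exI[where x=m], simp)
    next
      fix Y assume "Y \<in> ?R"
      then obtain L m l where "l < Suc L" "b [l] \<le> L"
        "p [l, f [l, seg B L mod 2 ^ (b [l])], seg Y L mod 2 ^ l, m] = 0"
        by (auto split: if_splits)
      then have "p [l, seg A l, seg Y l, m] = 0" using fb(3) by (simp add: seg_mod)
      then show "Y \<in> W" using p by auto
    qed
  qed
qed

lemma enum_class:
  assumes "effective_enum U"
  shows "sigma01_class Z (U Z e)"
proof -
  have "\<exists>p. PR 5 p \<and> (\<forall>Z e. U Z e = {Y. \<exists>l m. p [e, l, seg Z l, seg Y l, m] = 0})"
    using assms unfolding effective_enum_def by (rule conjunct1)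
  then obtain p where p: "PR 5 p" "\<forall>Z e. U Z e = {Y. \<exists>l m. p [e, l, seg Z l, seg Y l, m] = 0}"
    by (elim exE conjE)
  have pf: "PRf 5 p" using p(1) by (rule PR_PRf)
  have "PRf 4 (\<lambda>xs. p [e, xs ! 0, xs ! 1, xs ! 2, xs ! 3])"
    by (intro PRf_app5[OF pf] PRf_const PRf_proj) simp_all
  then show ?thesis
    by (rule sigma01_classI) (use p(2) in simp)
qed



definition DD :: "nat list \<Rightarrow> nat \<Rightarrow> (nat list \<Rightarrow> nat) \<Rightarrow> nat \<Rightarrow> nat \<Rightarrow> bool" where
  "DD es k p n sZ \<longleftrightarrow> (\<exists>len<Suc n. \<exists>s<Suc n. n = prod_encode (len, s) \<and> s < 2 ^ len \<and>
     (\<forall>i<Suc len. k * i + k \<le> len \<longrightarrow> (\<exists>j<k. 2 ^ (k * i + j) \<le> s mod 2 ^ Suc (k * i + j))) \<and>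
     (\<forall>j<k. \<forall>l'<Suc len. k * l' \<le> len \<longrightarrow> (\<forall>m<Suc len.
        p [lookup es j, l', sZ mod 2 ^ l', \<Sum>i<l'. if 2 ^ (k * i + j) \<le> s mod 2 ^ Suc (k * i + j) then 2 ^ i else 0, m] \<noteq> 0)))"

lemma PRf_DD1: "PRf 4 (\<lambda>xs. if xs ! 0 = xs ! 2 \<and> DD es k p (xs ! 2) (xs ! 1) then 0 else 1)" if "PRf 5 p"
  unfolding DD_def by (intro PR_intros PRf_app5[OF that]) simp_all

lemma PRf_DD2: "PRf 4 (\<lambda>xs. if xs ! 0 = xs ! 2 \<and> \<not> DD es k p (xs ! 2) (xs ! 1) then 0 else 1)" if "PRf 5 p"
  unfolding DD_def by (intro PR_intros PRf_app5[OF that]) simp_all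

definition Good :: "(nat list \<Rightarrow> nat) \<Rightarrow> nat \<Rightarrow> (nat \<Rightarrow> nat) \<Rightarrow> nat set \<Rightarrow> nat \<Rightarrow> nat set \<Rightarrow> bool" where
  "Good p k E Z len S \<longleftrightarrow> (\<forall>i. k * i + k \<le> len \<longrightarrow> (\<exists>j<k. k * i + j \<in> S)) \<and>
     (\<forall>j<k. \<forall>l'\<le>len. k * l' \<le> len \<longrightarrow> (\<forall>m\<le>len. p [E j, l', seg Z l', seg {i. k * i + j \<in> S} l', m] \<noteq> 0))"

definition Tr :: "(nat list \<Rightarrow> nat) \<Rightarrow> nat \<Rightarrow> (nat \<Rightarrow> nat) \<Rightarrow> nat set \<Rightarrow> nat set" where
  "Tr p k E Z = {n. \<exists>len S. S \<subseteq> {..<len} \<and> n = strcode len S \<and> Good p k E Z len S}"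

lemma bitp_decode: "(2 ^ x \<le> s mod 2 ^ Suc x) \<longleftrightarrow> x \<in> set_decode s"
  by (simp only: bitp_iff set_decode_bit)

lemma sum_decode: "(\<Sum>i<l'. if 2 ^ (k * i + j) \<le> s mod 2 ^ Suc (k * i + j) then 2 ^ i else 0)
   = seg {i. k * i + j \<in> set_decode s} l'"
  by (subst seg_sum) (intro sum.cong, auto simp only: bitp_decode mem_Collect_eq)

lemma strcode_inj: "S \<subseteq> {..<l} \<Longrightarrow> S' \<subseteq> {..<l'} \<Longrightarrow> strcode l S = strcode l' S' \<Longrightarrow> l = l' \<and> S = S'"
  unfolding strcode_def
proof -
  assume a: "S \<subseteq> {..<l}" "S' \<subseteq> {..<l'}" "prod_encode (l, set_encode S) = prod_encode (l', set_encode S')"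
  have f: "finite S" "finite S'" using a(1,2) finite_subset by blast+
  from a(3) have "l = l'" "set_encode S = set_encode S'" by simp_all
  then show ?thesis using set_encode_eq[OF f] by simp
qed

lemma Tr_mem: "S \<subseteq> {..<l} \<Longrightarrow> strcode l S \<in> Tr p k E Z \<longleftrightarrow> Good p k E Z l S"
  unfolding Tr_def using strcode_inj by blast

lemma Tr_DD:
  assumes k: "0 < k" and es: "\<forall>j<k. lookup es j = E j"
  shows "n \<in> Tr p k E Z \<longleftrightarrow> DD es k p n (seg Z n)"
proof
  assume "n \<in> Tr p k E Z"
  then obtain len S where S: "S \<subseteq> {..<len}" "n = strcode len S" "Good p k E Z len S"
    unfolding Tr_def by blast
  have fin: "finite S" using S(1) finite_subset by blast
  define s where "s = set_encode S"
  have ds: "set_decode s = S" unfolding s_def using fin by simp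
  have n: "n = prod_encode (len, s)" using S(2) unfolding strcode_def s_def .
  have len: "len < Suc n" using le_prod_encode_1[of len s] n by simp
  have sl: "s < Suc n" using le_prod_encode_2[of s len] n by simp
  have s2: "s < 2 ^ len" unfolding s_def by (rule set_encode_less[OF S(1)])
  have cov: "\<forall>i<Suc len. k * i + k \<le> len \<longrightarrow> (\<exists>j<k. 2 ^ (k * i + j) \<le> s mod 2 ^ Suc (k * i + j))"
      using S(3) unfolding Good_def bitp_decode ds by blast
  have av: "\<forall>j<k. \<forall>l'<Suc len. k * l' \<le> len \<longrightarrow> (\<forall>m<Suc len.
        p [lookup es j, l', seg Z n mod 2 ^ l', \<Sum>i<l'. if 2 ^ (k * i + j) \<le> s mod 2 ^ Suc (k * i + j) then 2 ^ i else 0, m] \<noteq> 0)"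
    proof (intro allI impI)
    fix j l' m assume j: "j < k" and l': "l' < Suc len" "k * l' \<le> len" and m: "m < Suc len"
    have "seg Z n mod 2 ^ l' = seg Z l'" using l' len by (intro seg_mod) simp
    moreover have "p [E j, l', seg Z l', seg {i. k * i + j \<in> S} l', m] \<noteq> 0"
      using S(3) j l' m unfolding Good_def by simp
    ultimately show "p [lookup es j, l', seg Z n mod 2 ^ l', \<Sum>i<l'. if 2 ^ (k * i + j) \<le> s mod 2 ^ Suc (k * i + j) then 2 ^ i else 0, m] \<noteq> 0"
      unfolding sum_decode ds using es j by simp
    qed
  show "DD es k p n (seg Z n)"
    unfolding DD_def using len sl n s2 cov av by blast
next
  assume "DD es k p n (seg Z n)"
  then obtain len s where ls: "len < Suc n" "s < Suc n" "n = prod_encode (len, s)" "s < 2 ^ len"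
    and cov: "\<forall>i<Suc len. k * i + k \<le> len \<longrightarrow> (\<exists>j<k. 2 ^ (k * i + j) \<le> s mod 2 ^ Suc (k * i + j))"
    and av: "\<forall>j<k. \<forall>l'<Suc len. k * l' \<le> len \<longrightarrow> (\<forall>m<Suc len.
        p [lookup es j, l', seg Z n mod 2 ^ l', \<Sum>i<l'. if 2 ^ (k * i + j) \<le> s mod 2 ^ Suc (k * i + j) then 2 ^ i else 0, m] \<noteq> 0)"
    unfolding DD_def by blast
  define S where "S = set_decode s"
  have S: "S \<subseteq> {..<len}" unfolding S_def by (rule set_decode_sub[OF ls(4)])
  have n: "n = strcode len S" unfolding strcode_def S_def using ls(3) by simp
  have "Good p k E Z len S"
    unfolding Good_def
  proof (intro conjI allI impI)
    fix i assume i: "k * i + k \<le> len"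
    have "i \<le> k * i" using k by simp
    then have "i < Suc len" using i by linarith
    then show "\<exists>j<k. k * i + j \<in> S" using cov i unfolding bitp_decode S_def by blast
  next
    fix j l' m assume j: "j < k" and l': "l' \<le> len" "k * l' \<le> len" and m: "m \<le> len"
    have "seg Z n mod 2 ^ l' = seg Z l'" using l' ls(1) by (intro seg_mod) simp
    moreover have "p [lookup es j, l', seg Z n mod 2 ^ l', \<Sum>i<l'. if 2 ^ (k * i + j) \<le> s mod 2 ^ Suc (k * i + j) then 2 ^ i else 0, m] \<noteq> 0"
      using av j l' m by (meson le_imp_less_Suc)
    ultimately show "p [E j, l', seg Z l', seg {i. k * i + j \<in> S} l', m] \<noteq> 0"
      using es j unfolding sum_decode S_def by simp
  qed
  then show "n \<in> Tr p k E Z" unfolding Tr_def using S n by blast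
qed

lemma Good_mono:
  assumes "Good p k E Z l S" "l' \<le> l"
  shows "Good p k E Z l' (S \<inter> {..<l'})"
  unfolding Good_def
proof (intro conjI allI impI)
  fix i assume i: "k * i + k \<le> l'"
  then obtain j where "j < k" "k * i + j \<in> S" using assms unfolding Good_def by force
  then show "\<exists>j<k. k * i + j \<in> S \<inter> {..<l'}" using i by (intro exI[of _ j]) auto
next
  fix j l'' m assume j: "j < k" and l'': "l'' \<le> l'" "k * l'' \<le> l'" and m: "m \<le> l'"
  have "{i. k * i + j \<in> S \<inter> {..<l'}} \<inter> {..<l''} = {i. k * i + j \<in> S} \<inter> {..<l''}"
  proof -
    have "k * i + j < l'" if "i < l''" for i
    proof -
      have "k * i + j < k * i + k" using j by simp
      also have "\<dots> = k * Suc i" by simp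
      also have "\<dots> \<le> k * l''" using that by (intro mult_le_mono2) simp
      finally show ?thesis using l'' by linarith
    qed
    then show ?thesis by auto
  qed
  then have "seg {i. k * i + j \<in> S \<inter> {..<l'}} l'' = seg {i. k * i + j \<in> S} l''"
    unfolding seg_def by simp
  then show "p [E j, l'', seg Z l'', seg {i. k * i + j \<in> S \<inter> {..<l'}} l'', m] \<noteq> 0"
    using assms j l'' m unfolding Good_def by simp
qed



lemma enum_p:
  assumes "effective_enum U"
  obtains p where "PR 5 p" "\<forall>Z e. U Z e = {Y. \<exists>l m. p [e, l, seg Z l, seg Y l, m] = 0}"
proof -
  have "\<exists>p. PR 5 p \<and> (\<forall>Z e. U Z e = {Y. \<exists>l m. p [e, l, seg Z l, seg Y l, m] = 0})"
    using assms unfolding effective_enum_def by (rule conjunct1)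
  then show ?thesis using that by (elim exE conjE)
qed

lemma scott_red: "scott_set S \<Longrightarrow> A \<in> S \<Longrightarrow> turing_red B A \<Longrightarrow> B \<in> S"
  unfolding scott_set_def by blast

lemma scott_join: "scott_set S \<Longrightarrow> A \<in> S \<Longrightarrow> B \<in> S \<Longrightarrow> join A B \<in> S"
  unfolding scott_set_def by blast

lemma scott_path: "scott_set S \<Longrightarrow> T \<in> S \<Longrightarrow> inf_bin_tree T \<Longrightarrow> \<exists>P\<in>S. is_path P T"
  unfolding scott_set_def by blast

lemma tree_in:
  assumes sc: "scott_set S" and Z: "Z \<in> S" and p: "PRf 5 p" and k: "0 < k"
    and es: "\<forall>j<k. lookup es j = E j"
  shows "Tr p k E Z \<in> S"
proof -
  have "sigma01_set Z (Tr p k E Z)"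
  proof (rule sigma01_setI[OF PRf_DD1[OF p, of es k]])
    show "Tr p k E Z = {n. \<exists>l m. (\<lambda>xs. if xs ! 0 = xs ! 2 \<and> DD es k p (xs ! 2) (xs ! 1) then 0 else (1::nat))
       [l, seg Z l, n, m] = 0}"
      by (auto simp: Tr_DD[OF k es] split: if_splits)
  qed
  moreover have "sigma01_set Z (- Tr p k E Z)"
  proof (rule sigma01_setI[OF PRf_DD2[OF p, of es k]])
    show "- Tr p k E Z = {n. \<exists>l m. (\<lambda>xs. if xs ! 0 = xs ! 2 \<and> \<not> DD es k p (xs ! 2) (xs ! 1) then 0 else (1::nat))
       [l, seg Z l, n, m] = 0}"
      by (auto simp: Tr_DD[OF k es] split: if_splits)
  qed
  ultimately show ?thesis using scott_red[OF sc Z] unfolding turing_red_def by blast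
qed

lemma piece_in:
  assumes sc: "scott_set S" and P: "P \<in> S"
  shows "{i. k * i + j \<in> P} \<in> S"
proof -
  have q1: "PRf 4 (\<lambda>xs. if k * xs ! 2 + j < xs ! 0 \<and> 2 ^ (k * xs ! 2 + j) \<le> xs ! 1 mod 2 ^ Suc (k * xs ! 2 + j) then 0 else 1)"
    by (intro PR_intros) simp_all
  have q2: "PRf 4 (\<lambda>xs. if k * xs ! 2 + j < xs ! 0 \<and> \<not> 2 ^ (k * xs ! 2 + j) \<le> xs ! 1 mod 2 ^ Suc (k * xs ! 2 + j) then 0 else 1)"
    by (intro PR_intros) simp_all
  have "sigma01_set P {i. k * i + j \<in> P}"
  proof (rule sigma01_setI[OF q1])
    show "{i. k * i + j \<in> P} = {n. \<exists>l m. (\<lambda>xs. if k * xs ! 2 + j < xs ! 0 \<and> 2 ^ (k * xs ! 2 + j) \<le> xs ! 1 mod 2 ^ Suc (k * xs ! 2 + j) then 0 else (1::nat)) [l, seg P l, n, m] = 0}"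
    proof (rule set_eqI, rule iffI)
      fix n assume "n \<in> {i. k * i + j \<in> P}"
      then have "k * n + j < Suc (k * n + j) \<and> 2 ^ (k * n + j) \<le> seg P (Suc (k * n + j)) mod 2 ^ Suc (k * n + j)"
        by (simp only: seg_bitp) simp
      then show "n \<in> {n. \<exists>l m. (\<lambda>xs. if k * xs ! 2 + j < xs ! 0 \<and> 2 ^ (k * xs ! 2 + j) \<le> xs ! 1 mod 2 ^ Suc (k * xs ! 2 + j) then 0 else (1::nat)) [l, seg P l, n, m] = 0}"
        by (intro CollectI exI[of _ "Suc (k * n + j)"] exI[of _ 0]) simp
    next
      fix n assume "n \<in> {n. \<exists>l m. (\<lambda>xs. if k * xs ! 2 + j < xs ! 0 \<and> 2 ^ (k * xs ! 2 + j) \<le> xs ! 1 mod 2 ^ Suc (k * xs ! 2 + j) then 0 else (1::nat)) [l, seg P l, n, m] = 0}"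
      then obtain l where "2 ^ (k * n + j) \<le> seg P l mod 2 ^ Suc (k * n + j)"
        by (auto split: if_splits)
      then show "n \<in> {i. k * i + j \<in> P}" by (simp only: seg_bitp) simp
    qed
  qed
  moreover have "sigma01_set P (- {i. k * i + j \<in> P})"
  proof (rule sigma01_setI[OF q2])
    show "- {i. k * i + j \<in> P} = {n. \<exists>l m. (\<lambda>xs. if k * xs ! 2 + j < xs ! 0 \<and> \<not> 2 ^ (k * xs ! 2 + j) \<le> xs ! 1 mod 2 ^ Suc (k * xs ! 2 + j) then 0 else (1::nat)) [l, seg P l, n, m] = 0}"
    proof (rule set_eqI, rule iffI)
      fix n assume "n \<in> - {i. k * i + j \<in> P}"
      then have "k * n + j < Suc (k * n + j) \<and> \<not> 2 ^ (k * n + j) \<le> seg P (Suc (k * n + j)) mod 2 ^ Suc (k * n + j)"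
        by (simp only: seg_bitp) simp
      then show "n \<in> {n. \<exists>l m. (\<lambda>xs. if k * xs ! 2 + j < xs ! 0 \<and> \<not> 2 ^ (k * xs ! 2 + j) \<le> xs ! 1 mod 2 ^ Suc (k * xs ! 2 + j) then 0 else (1::nat)) [l, seg P l, n, m] = 0}"
        by (intro CollectI exI[of _ "Suc (k * n + j)"] exI[of _ 0]) simp
    next
      fix n assume "n \<in> {n. \<exists>l m. (\<lambda>xs. if k * xs ! 2 + j < xs ! 0 \<and> \<not> 2 ^ (k * xs ! 2 + j) \<le> xs ! 1 mod 2 ^ Suc (k * xs ! 2 + j) then 0 else (1::nat)) [l, seg P l, n, m] = 0}"
      then obtain l where "k * n + j < l" "\<not> 2 ^ (k * n + j) \<le> seg P l mod 2 ^ Suc (k * n + j)"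
        by (auto split: if_splits)
      then show "n \<in> - {i. k * i + j \<in> P}" by (simp only: seg_bitp) simp
    qed
  qed
  ultimately show ?thesis using scott_red[OF sc P] unfolding turing_red_def by blast
qed

lemma seg_eqI: "A \<inter> {..<l} = B \<inter> {..<l} \<Longrightarrow> seg A l = seg B l"
  unfolding seg_def by simp

lemma lt_bound: "j < k \<Longrightarrow> i < l \<Longrightarrow> k * i + j < k * (l::nat)"
proof -
  assume "j < k" "i < l"
  then have "k * i + j < k * Suc i" by simp
  also have "\<dots> \<le> k * l" using \<open>i < l\<close> by (intro mult_le_mono2) simp
  finally show ?thesis .
qed

lemma dec_unique: "j < (k::nat) \<Longrightarrow> j' < k \<Longrightarrow> k * i + j = k * i' + j' \<Longrightarrow> i = i' \<and> j = j'"
proof -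
  assume a: "j < k" "j' < k" "k * i + j = k * i' + j'"
  have "(k * i + j) div k = i" "(k * i + j) mod k = j" using a(1) by simp_all
  moreover have "(k * i' + j') div k = i'" "(k * i' + j') mod k = j'" using a(2) by simp_all
  ultimately show ?thesis using a(3) by metis
qed

lemma basis:
  fixes k :: nat
  assumes enum: "effective_enum U" and sc: "scott_set S" and Z: "Z \<in> S"
    and cover: "(\<Union>j<k. Y j) = UNIV" and avoid: "\<forall>j<k. Y j \<notin> U Z (E j)"
  shows "\<exists>Y'. (\<Union>j<k. Y' j) = UNIV \<and> (\<forall>j<k. Y' j \<in> S \<and> Y' j \<notin> U Z (E j))"
proof -
  obtain p where p: "PR 5 p" "\<forall>Z e. U Z e = {Y. \<exists>l m. p [e, l, seg Z l, seg Y l, m] = 0}"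
    using enum_p[OF enum] by blast
  have pf: "PRf 5 p" using p(1) by (rule PR_PRf)
  have pU: "\<And>Z e. U Z e = {Y. \<exists>l m. p [e, l, seg Z l, seg Y l, m] = 0}" using p(2) by blast
  have k: "0 < k"
  proof (rule ccontr)
    assume "\<not> 0 < k"
    then have "k = 0" by simp
    then show False using cover by simp
  qed
  define es where "es = map E [0..<k]"
  have es: "\<forall>j<k. lookup es j = E j" by (simp add: lookup_def es_def)
  define T where "T = Tr p k E Z"
  have Tin: "T \<in> S" unfolding T_def by (rule tree_in[OF sc Z pf k es])
  define P0 where "P0 = {k * i + j | i j. j < k \<and> i \<in> Y j}"
  have P0mem: "k * i + j \<in> P0 \<longleftrightarrow> i \<in> Y j" if j: "j < k" for i j
  proof
    assume "k * i + j \<in> P0"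
    then obtain i' j' where "k * i + j = k * i' + j'" "j' < k" "i' \<in> Y j'" unfolding P0_def by blast
    moreover then have "i = i' \<and> j = j'" using dec_unique[OF j] by blast
    ultimately show "i \<in> Y j" by simp
  next
    assume "i \<in> Y j"
    then show "k * i + j \<in> P0" unfolding P0_def using j by blast
  qed
  have good: "Good p k E Z len (P0 \<inter> {..<len})" for len
    unfolding Good_def
  proof (intro conjI allI impI)
    fix i assume i: "k * i + k \<le> len"
    have "i \<in> (\<Union>j<k. Y j)" using cover by simp
    then obtain j where j: "j < k" "i \<in> Y j" by blast
    then have "k * i + j \<in> P0" using P0mem by simp
    moreover have "k * i + j < len" using i j by linarith
    ultimately show "\<exists>j<k. k * i + j \<in> P0 \<inter> {..<len}" using j by blast
  next
    fix j l' m assume j: "j < k" and l': "l' \<le> len" "k * l' \<le> len" and m: "m \<le> len"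
    have "{i. k * i + j \<in> P0 \<inter> {..<len}} \<inter> {..<l'} = Y j \<inter> {..<l'}"
    proof (rule set_eqI)
      fix x
      show "x \<in> {i. k * i + j \<in> P0 \<inter> {..<len}} \<inter> {..<l'} \<longleftrightarrow> x \<in> Y j \<inter> {..<l'}"
      proof (cases "x < l'")
        case True
        then have "k * x + j < len" using lt_bound[OF j True] l'(2) by linarith
        then show ?thesis using True P0mem[OF j, of x] by simp
      qed simp
    qed
    then have e: "seg {i. k * i + j \<in> P0 \<inter> {..<len}} l' = seg (Y j) l'" by (rule seg_eqI)
    have "Y j \<notin> U Z (E j)" using avoid j by blast
    then have "p [E j, l', seg Z l', seg (Y j) l', m] \<noteq> 0" unfolding pU by simp
    then show "p [E j, l', seg Z l', seg {i. k * i + j \<in> P0 \<inter> {..<len}} l', m] \<noteq> 0"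
      unfolding e .
  qed
  have inT: "strcode len (P0 \<inter> {..<len}) \<in> T" for len
    unfolding T_def by (subst Tr_mem) (use good in auto)
  have inj: "inj (\<lambda>len. strcode len (P0 \<inter> {..<len}))"
  proof (rule injI)
    fix x y assume "strcode x (P0 \<inter> {..<x}) = strcode y (P0 \<inter> {..<y})"
    then show "x = y" using strcode_inj[of "P0 \<inter> {..<x}" x "P0 \<inter> {..<y}" y] by simp
  qed
  have "infinite (range (\<lambda>len. strcode len (P0 \<inter> {..<len})))"
    using finite_imageD[OF _ inj] infinite_UNIV_nat by blast
  moreover have "range (\<lambda>len. strcode len (P0 \<inter> {..<len})) \<subseteq> T" using inT by blast
  ultimately have infT: "infinite T" using infinite_super by blast
  have tree: "inf_bin_tree T"
    unfolding inf_bin_tree_def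
  proof (intro conjI infT)
    show "\<forall>c\<in>T. \<exists>l S. S \<subseteq> {..<l} \<and> c = strcode l S"
      unfolding T_def Tr_def by blast
    show "\<forall>l S k'. S \<subseteq> {..<l} \<longrightarrow> strcode l S \<in> T \<longrightarrow> k' \<le> l \<longrightarrow> strcode k' (S \<inter> {..<k'}) \<in> T"
    proof (intro allI impI)
      fix l S' k' assume a: "S' \<subseteq> {..<l}" "strcode l S' \<in> T" "k' \<le> l"
      then have "Good p k E Z l S'" unfolding T_def using Tr_mem by blast
      then have "Good p k E Z k' (S' \<inter> {..<k'})" using a(3) by (rule Good_mono)
      then show "strcode k' (S' \<inter> {..<k'}) \<in> T" unfolding T_def by (subst Tr_mem) auto
    qed
  qed
  obtain P where P: "P \<in> S" "is_path P T" using scott_path[OF sc Tin tree] by blast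
  have gp: "Good p k E Z l (P \<inter> {..<l})" for l
    using P(2) unfolding is_path_def T_def by (subst Tr_mem[symmetric]) auto
  define Y' where "Y' j = {i. k * i + j \<in> P}" for j
  have cov': "(\<Union>j<k. Y' j) = UNIV"
  proof -
    have "i \<in> (\<Union>j<k. Y' j)" for i
    proof -
      have "\<exists>j<k. k * i + j \<in> P \<inter> {..<k * i + k}" using gp[of "k * i + k"] unfolding Good_def by blast
      then show ?thesis unfolding Y'_def by blast
    qed
    then show ?thesis by blast
  qed
  have av': "Y' j \<notin> U Z (E j)" if j: "j < k" for j
  proof
    assume "Y' j \<in> U Z (E j)"
    then obtain l' m where lm: "p [E j, l', seg Z l', seg (Y' j) l', m] = 0" unfolding pU by blast
    define len where "len = k * l' + l' + m"
    have "{i. k * i + j \<in> P \<inter> {..<len}} \<inter> {..<l'} = Y' j \<inter> {..<l'}"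
    proof (rule set_eqI)
      fix x
      show "x \<in> {i. k * i + j \<in> P \<inter> {..<len}} \<inter> {..<l'} \<longleftrightarrow> x \<in> Y' j \<inter> {..<l'}"
      proof (cases "x < l'")
        case True
        then have "k * x + j < len" using lt_bound[OF j True] unfolding len_def by linarith
        then show ?thesis using True unfolding Y'_def by simp
      qed simp
    qed
    then have e: "seg {i. k * i + j \<in> P \<inter> {..<len}} l' = seg (Y' j) l'" by (rule seg_eqI)
    have "p [E j, l', seg Z l', seg {i. k * i + j \<in> P \<inter> {..<len}} l', m] \<noteq> 0"
      using gp[of len] j unfolding Good_def len_def by simp
    then show False unfolding e using lm by simp
  qed
  have "Y' j \<in> S" for j unfolding Y'_def by (rule piece_in[OF sc P(1)])
  then show ?thesis using cov' av' by blast
qed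

lemma gather:
  fixes k :: nat
  assumes sc: "scott_set S" and F: "\<forall>j<k. F j \<in> S" and ne: "Z0 \<in> S"
  shows "\<exists>Z\<in>S. \<forall>j<k. red (F j) Z"
  using F
proof (induction k)
  case 0
  then show ?case using ne by blast
next
  case (Suc k)
  then obtain Z' where Z': "Z' \<in> S" "\<forall>j<k. red (F j) Z'" by auto
  have Fk: "F k \<in> S" using Suc.prems by simp
  have "join (F k) Z' \<in> S" by (rule scott_join[OF sc Fk Z'(1)])
  moreover have "\<forall>j<Suc k. red (F j) (join (F k) Z')"
  proof (intro allI impI)
    fix j assume "j < Suc k"
    then show "red (F j) (join (F k) Z')"
    proof (cases "j = k")
      case True
      then show ?thesis using red_join1 by simp
    next
      case False
      then have "j < k" using \<open>j < Suc k\<close> by simp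
      then show ?thesis using Z'(2) red_join2 red_trans by blast
    qed
  qed
  ultimately show ?case by blast
qed

lemma largeness_mono: "largeness B \<Longrightarrow> B \<subseteq> A' \<Longrightarrow> upward_closed A' \<Longrightarrow> largeness A'"
  unfolding largeness_def by blast

lemma main_lemma:
  fixes k :: nat
  assumes enum: "effective_enum U" and sc: "scott_set (range X)" and lg: "largeness A"
    and coh: "M_cohesive (range X) A" and cover: "(\<Union>j<k. Y j) = UNIV"
    and bad: "\<forall>j<k. \<exists>Z e. Z \<in> range X \<and> largeness (A \<inter> U Z e) \<and> Y j \<notin> U Z e"
  shows False
proof -
  have h1: "\<forall>j. \<exists>Z. \<exists>e. j < k \<longrightarrow> Z \<in> range X \<and> largeness (A \<inter> U Z e) \<and> Y j \<notin> U Z e"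
    using bad by blast
  obtain Zf where h2: "\<forall>j. \<exists>e. j < k \<longrightarrow> Zf j \<in> range X \<and> largeness (A \<inter> U (Zf j) e) \<and> Y j \<notin> U (Zf j) e"
    using choice[OF h1] by blast
  obtain Ef where ZE: "\<forall>j. j < k \<longrightarrow> Zf j \<in> range X \<and> largeness (A \<inter> U (Zf j) (Ef j)) \<and> Y j \<notin> U (Zf j) (Ef j)"
    using choice[OF h2] by blast
  have "\<exists>Z\<in>range X. \<forall>j<k. red (Zf j) Z"
    by (rule gather[OF sc]) (use ZE in auto)
  then obtain Z where Z: "Z \<in> range X" "\<forall>j<k. red (Zf j) Z" by blast
  have surj: "\<forall>Z \<U>. sigma01_class Z \<U> \<and> upward_closed \<U> \<longrightarrow> (\<exists>e. U Z e = \<U>)"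
    and ucU: "\<forall>Z e. upward_closed (U Z e)"
    using enum unfolding effective_enum_def by blast+
  have h3: "\<forall>j. \<exists>e'. j < k \<longrightarrow> U Z e' = U (Zf j) (Ef j)"
  proof (intro allI)
    fix j
    show "\<exists>e'. j < k \<longrightarrow> U Z e' = U (Zf j) (Ef j)"
    proof (cases "j < k")
      case True
      have "sigma01_class Z (U (Zf j) (Ef j))"
        using class_red[OF _ enum_class[OF enum]] Z(2) True by blast
      then show ?thesis using surj ucU by blast
    qed simp
  qed
  obtain E where E: "\<forall>j. j < k \<longrightarrow> U Z (E j) = U (Zf j) (Ef j)"
    using choice[OF h3] by blast
  have avoid: "\<forall>j<k. Y j \<notin> U Z (E j)" using E ZE by simp
  obtain Y' where Y': "(\<Union>j<k. Y' j) = UNIV" "\<forall>j<k. Y' j \<in> range X \<and> Y' j \<notin> U Z (E j)"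
    using basis[OF enum sc Z(1) cover avoid] by blast
  obtain j where j: "j < k" "Y' j \<in> A" using lg Y'(1) unfolding largeness_def by blast
  have "A \<subseteq> LL (Y' j) \<or> A \<subseteq> LL (- Y' j)" using coh Y'(2) j(1) unfolding M_cohesive_def by blast
  moreover have "\<not> A \<subseteq> LL (- Y' j)"
  proof
    assume "A \<subseteq> LL (- Y' j)"
    then have "infinite (Y' j \<inter> - Y' j)" using j(2) unfolding LL_def by blast
    then show False by simp
  qed
  ultimately have AL: "A \<subseteq> LL (Y' j)" by blast
  have lgj: "largeness (A \<inter> U Z (E j))" using ZE E j(1) by simp
  define W where "W t = (if t = (0::nat) then Y' j else - Y' j)" for t
  have "(\<Union>t<2. W t) = UNIV"
  proof -
    have "x \<in> W 0 \<union> W 1" for x unfolding W_def by auto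
    then show ?thesis by (auto simp: lessThan_nat_numeral)
  qed
  then obtain t where t: "t < 2" "W t \<in> A \<inter> U Z (E j)" using lgj unfolding largeness_def by blast
  show False
  proof (cases "t = 0")
    case True
    then show False using t(2) Y'(2) j(1) unfolding W_def by simp
  next
    case False
    then have "- Y' j \<in> A" using t unfolding W_def by simp
    then have "infinite (- Y' j \<inter> Y' j)" using AL unfolding LL_def by blast
    then show False by simp
  qed
qed

theorem lemma2p11:
  fixes U :: "nat set \<Rightarrow> nat \<Rightarrow> nat set set"
    and X :: "nat \<Rightarrow> nat set"
    and C :: "(nat \<times> nat) set"
  assumes "effective_enum U"
    and "scott_set (range X)"
    and "largeness (UMC U X C)"
    and "M_cohesive (range X) (UMC U X C)"
  shows "largeness (gen_class U X C) \<and> M_minimal U (range X) (gen_class U X C)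
         \<and> gen_class U X C \<subseteq> UMC U X C"
proof -
  note enum = assms(1) and sc = assms(2) and lg = assms(3) and coh = assms(4)
  let ?A = "UMC U X C"
  let ?G = "gen_class U X C"
  have ucU: "\<forall>Z e. upward_closed (U Z e)"
    using enum unfolding effective_enum_def by blast
  have gen_iff: "x \<in> ?G \<longleftrightarrow> (\<forall>Z e. Z \<in> range X \<longrightarrow> largeness (?A \<inter> U Z e) \<longrightarrow> x \<in> U Z e)" for x
    unfolding gen_class_def by blast
  have umc_iff: "x \<in> ?A \<longleftrightarrow> (\<forall>e i. (e, i) \<in> C \<longrightarrow> x \<in> U (X i) e)" for x
    unfolding UMC_def by blast
  have ucA: "upward_closed ?A"
    unfolding upward_closed_def umc_iff using ucU unfolding upward_closed_def by blast
  have sub: "?G \<subseteq> ?A"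
  proof
    fix x assume x: "x \<in> ?G"
    show "x \<in> ?A" unfolding umc_iff
    proof (intro allI impI)
      fix e i assume ei: "(e, i) \<in> C"
      have "?A \<inter> U (X i) e = ?A" using ei umc_iff by blast
      then have "largeness (?A \<inter> U (X i) e)" using lg by simp
      then show "x \<in> U (X i) e" using x gen_iff by blast
    qed
  qed
  have part: "\<exists>j<k. Y j \<in> ?G" if cover: "(\<Union>j<k. Y j) = UNIV" for k :: nat and Y
  proof (rule ccontr)
    assume "\<not> (\<exists>j<k. Y j \<in> ?G)"
    then have "\<forall>j<k. \<exists>Z e. Z \<in> range X \<and> largeness (?A \<inter> U Z e) \<and> Y j \<notin> U Z e"
      using gen_iff by blast
    then show False using main_lemma[OF enum sc lg coh cover] by blast
  qed
  have ucG: "upward_closed ?G"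
    unfolding upward_closed_def gen_iff using ucU unfolding upward_closed_def by blast
  have "(\<Union>j<(1::nat). (\<lambda>_. UNIV) j) = (UNIV :: nat set)" by auto
  then have "\<exists>j<(1::nat). (\<lambda>_. UNIV) j \<in> ?G" by (rule part)
  then have "?G \<noteq> {}" by blast
  then have lgG: "largeness ?G" unfolding largeness_def using ucG part by blast
  have minG: "M_minimal U (range X) ?G"
    unfolding M_minimal_def
  proof (intro ballI allI)
    fix Z e assume Z: "Z \<in> range X"
    show "?G \<subseteq> U Z e \<or> \<not> largeness (?G \<inter> U Z e)"
    proof (cases "largeness (?A \<inter> U Z e)")
      case True
      then show ?thesis using gen_iff Z by blast
    next
      case False
      have "\<not> largeness (?G \<inter> U Z e)"
      proof
        assume "largeness (?G \<inter> U Z e)"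
        moreover have "?G \<inter> U Z e \<subseteq> ?A \<inter> U Z e" using sub by blast
        moreover have "upward_closed (?A \<inter> U Z e)"
          using ucA ucU unfolding upward_closed_def by blast
        ultimately have "largeness (?A \<inter> U Z e)" by (rule largeness_mono)
        then show False using False by simp
      qed
      then show ?thesis by blast
    qed
  qed
  show ?thesis using lgG minG sub by blast
qed


end
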